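(* Let $\mathcal A_+,\mathcal A_-\subseteq\mathbb R^n$ be disjoint finite sets such that $(\mathcal A_+,\mathcal A_-)$ is nonseparable of dimension $d$, and let $D\in\mathcal F_d(\mathcal A_+)$ with $\mathcal A_-\subseteq D$. Then the following are equivalent: (i) there is a facet $\Gamma_D$ of $D$ with $\mathcal A_-\subseteq\Gamma_D$; (ii) there exist $\Delta\in\Lambda(\mathcal A_+,D)$ and a facet $\Gamma_\Delta$ of $\Delta$ with $\mathcal A_-\subseteq\Gamma_\Delta$.
   Context: For disjoint finite sets $\mathcal A_+,\mathcal A_-\subseteq\mathbb R^n$, the dimension of $(\mathcal A_+,\mathcal A_-)$ is $\dim\operatorname{conv}(\mathcal A_+\cup\mathcal A_-)$. Let $d$ be this dimension. $\mathcal F(\mathcal A_+)$ denotes the common refinement of all regular polyhedral subdivisions of the point configuration $\mathcal A_+$ (the complex of all intersections $G_1\cap\dots\cap G_k$ with $G_i$ a cell of the $i$-th subdivision), and $\mathcal F_d(\mathcal A_+)$ its $d$-dimensional cells. $(\mathcal A_+,\mathcal A_-)$ is nonseparable if $\mathcal A_-\subseteq\operatorname{relint}(\operatorname{conv}(\mathcal A_+))$ and there is $D\in\mathcal F_d(\mathcal A_+)$ with $\mathcal A_-\subseteq D$. For such $D$, $\Lambda(\mathcal A_+,D)$ is the set of $d$-dimensional simplices $\Delta$ with vertices in $\mathcal A_+$ such that $\operatorname{relint}(D)\subseteq\operatorname{relint}(\Delta)$. *)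

theory Defs
  imports "HOL-Analysis.Analysis"
begin

definition pair_dim :: "'a::euclidean_space set \<Rightarrow> 'a set \<Rightarrow> int" where
  "pair_dim Ap Am = aff_dim (convex hull (Ap \<union> Am))"

text \<open>Cells of the regular subdivision of the point configuration A induced by the
  height function h: projections of the (nonempty) lower faces of the lifted polytope
  conv (a, h a). A lower face is cut out by a linear functional (w,1) attaining its
  minimum beta over the lifted points; its projection is the convex hull of the points
  of A whose lifts lie on it.\<close>
definition reg_cell :: "'a::euclidean_space set \<Rightarrow> ('a \<Rightarrow> real) \<Rightarrow> 'a set \<Rightarrow> bool" where
  "reg_cell A h C \<longleftrightarrow>
     (\<exists>w \<beta>. (\<forall>a\<in>A. \<beta> \<le> h a + w \<bullet> a) \<and> {a\<in>A. h a + w \<bullet> a = \<beta>} \<noteq> {} \<and>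
            C = convex hull {a\<in>A. h a + w \<bullet> a = \<beta>})"

text \<open>F(A): common refinement of all regular subdivisions of A: all (nonempty) intersections
  of a choice of one cell from each regular subdivision (indexed by height functions).\<close>
definition refinement_cells :: "'a::euclidean_space set \<Rightarrow> 'a set set" where
  "refinement_cells A =
     {C. C \<noteq> {} \<and> (\<exists>G. (\<forall>h. reg_cell A h (G h)) \<and> C = \<Inter> (range G))}"

definition Fd :: "'a::euclidean_space set \<Rightarrow> int \<Rightarrow> 'a set set" where
  "Fd A d = {C \<in> refinement_cells A. aff_dim C = d}"

definition nonseparable :: "'a::euclidean_space set \<Rightarrow> 'a set \<Rightarrow> bool" where
  "nonseparable Ap Am \<longleftrightarrow>
     Am \<subseteq> rel_interior (convex hull Ap) \<and> (\<exists>D \<in> Fd Ap (pair_dim Ap Am). Am \<subseteq> D)"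

definition Lambda :: "'a::euclidean_space set \<Rightarrow> 'a set \<Rightarrow> int \<Rightarrow> 'a set set" where
  "Lambda Ap D d =
     {\<Delta>. (\<exists>C. C \<subseteq> Ap \<and> \<not> affine_dependent C \<and> int (card C) = d + 1 \<and> \<Delta> = convex hull C)
          \<and> rel_interior D \<subseteq> rel_interior \<Delta>}"

end

theory Submission
  imports Defs
begin


lemma relint_mono_dim:
  fixes S T :: "'a::euclidean_space set"
  assumes "S \<subseteq> T" "aff_dim S = aff_dim T"
  shows "rel_interior S \<subseteq> rel_interior T"
proof -
  have "affine hull S \<subseteq> affine hull T" using assms(1) by (simp add: hull_mono)
  moreover have "\<not> affine hull S \<subset> affine hull T" using aff_dim_psubset[of S T] assms(2) by auto
  ultimately show ?thesis using subset_rel_interior assms(1) by blast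
qed

lemma sum_affine_eval:
  fixes w :: "'a::euclidean_space"
  assumes "sum u T = 1"
  shows "(\<Sum>a\<in>T. u a * (h a + w \<bullet> a - \<beta>)) = (\<Sum>a\<in>T. u a * h a) + w \<bullet> (\<Sum>a\<in>T. u a *\<^sub>R a) - \<beta>"
proof -
  have "(\<Sum>a\<in>T. u a * (h a + w \<bullet> a - \<beta>)) = (\<Sum>a\<in>T. u a * h a) + (\<Sum>a\<in>T. u a * (w \<bullet> a)) - (\<Sum>a\<in>T. u a) * \<beta>"
    by (simp add: algebra_simps sum.distrib sum_subtractf sum_distrib_right sum_distrib_left)
  moreover have "(\<Sum>a\<in>T. u a * (w \<bullet> a)) = w \<bullet> (\<Sum>a\<in>T. u a *\<^sub>R a)"
    by (simp add: inner_sum_right)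
  ultimately show ?thesis using assms by simp
qed

lemma relint_hull_pos:
  fixes T :: "'a::euclidean_space set"
  assumes "finite T" "z \<in> rel_interior (convex hull T)"
  shows "\<exists>u. (\<forall>b\<in>T. 0 < u b) \<and> sum u T = 1 \<and> (\<Sum>b\<in>T. u b *\<^sub>R b) = z"
  using assms rel_interior_convex_hull_union [where S="\<lambda>x. {x}" and I=T] by auto

lemma generic_height:
  fixes A :: "'a::euclidean_space set"
  assumes "finite A"
  shows "\<exists>g::'a\<Rightarrow>real. \<forall>T\<subseteq>A. affine_dependent T \<longrightarrow> \<not>(\<exists>w \<beta>. \<forall>a\<in>T. g a + w \<bullet> a = \<beta>)"
proof -
  obtain idx :: "'a \<Rightarrow> nat" and n where idx: "idx ` A = {i. i < n}" "inj_on idx A"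
    using finite_imp_inj_to_nat_seg[OF assms] by blast
  define \<T> where "\<T> = {T. T \<subseteq> A \<and> affine_dependent T}"
  have finT: "finite \<T>" unfolding \<T>_def using assms by simp
  have "\<forall>T\<in>\<T>. \<exists>U. sum U T = 0 \<and> (\<exists>v\<in>T. U v \<noteq> 0) \<and> (\<Sum>v\<in>T. U v *\<^sub>R v) = 0"
    using affine_dependent_explicit_finite assms unfolding \<T>_def by (metis (mono_tags) finite_subset mem_Collect_eq)
  then obtain U where U: "\<And>T. T \<in> \<T> \<Longrightarrow> sum (U T) T = 0 \<and> (\<exists>v\<in>T. U T v \<noteq> 0) \<and> (\<Sum>v\<in>T. U T v *\<^sub>R v) = 0"
    by metis
  define c where "c T i = (\<Sum>a\<in>T. if idx a = i then U T a else 0)" for T i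
  have poly: "(\<Sum>i\<le>n. c T i * s ^ i) = (\<Sum>a\<in>T. U T a * s ^ idx a)" if "T \<in> \<T>" for T s
  proof -
    have fT: "finite T" "T \<subseteq> A" using that assms unfolding \<T>_def by (auto intro: finite_subset)
    have "(\<Sum>i\<le>n. c T i * s ^ i) = (\<Sum>i\<le>n. \<Sum>a\<in>T. (if idx a = i then U T a * s ^ i else 0))"
      unfolding c_def by (auto simp add: sum_distrib_right intro!: sum.cong)
    also have "\<dots> = (\<Sum>a\<in>T. \<Sum>i\<le>n. (if idx a = i then U T a * s ^ i else 0))"
      by (rule sum.swap)
    also have "\<dots> = (\<Sum>a\<in>T. U T a * s ^ idx a)"
    proof (rule sum.cong[OF refl])
      fix a assume "a \<in> T"
      then have "idx a \<le> n" using idx fT by (metis image_eqI less_imp_le_nat mem_Collect_eq subsetD)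
      then show "(\<Sum>i\<le>n. (if idx a = i then U T a * s ^ i else 0)) = U T a * s ^ idx a"
        by (simp add: sum.delta[OF finite_atMost] eq_commute[of "idx a"])
    qed
    finally show ?thesis .
  qed
  have nz: "\<exists>k\<le>n. c T k \<noteq> 0" if TT: "T \<in> \<T>" for T
  proof -
    have fT: "finite T" "T \<subseteq> A" using TT assms unfolding \<T>_def by (auto intro: finite_subset)
    obtain v where v: "v \<in> T" "U T v \<noteq> 0" using U[OF TT] by blast
    have "c T (idx v) = (\<Sum>a\<in>T. if a = v then U T a else 0)"
      unfolding c_def
      using idx(2) fT v(1) by (intro sum.cong[OF refl]) (auto simp: inj_on_def)
    also have "\<dots> = U T v" using fT v by (simp add: sum.delta)
    finally have "c T (idx v) \<noteq> 0" using v by simp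
    moreover have "idx v \<le> n" using idx fT v by (metis image_eqI less_imp_le_nat mem_Collect_eq subsetD)
    ultimately show ?thesis by blast
  qed
  define R where "R = (\<Union>T\<in>\<T>. {s::real. (\<Sum>i\<le>n. c T i * s ^ i) = 0})"
  have "finite R" unfolding R_def
  proof (rule finite_UN_I[OF finT])
    fix T assume "T \<in> \<T>"
    then obtain k where "k \<le> n" "c T k \<noteq> 0" using nz by blast
    then show "finite {s::real. (\<Sum>i\<le>n. c T i * s ^ i) = 0}" by (rule polyfun_roots_finite[rotated])
  qed
  then obtain s where s: "s \<notin> R" using ex_new_if_finite[OF infinite_UNIV_char_0] by blast
  show ?thesis
  proof (intro exI[of _ "\<lambda>a. s ^ idx a"] allI impI notI)
    fix T assume T: "T \<subseteq> A" "affine_dependent T"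
    then have TT: "T \<in> \<T>" unfolding \<T>_def by simp
    assume "\<exists>w \<beta>. \<forall>a\<in>T. s ^ idx a + w \<bullet> a = \<beta>"
    then obtain w \<beta> where wb: "\<And>a. a \<in> T \<Longrightarrow> s ^ idx a = \<beta> - w \<bullet> a" by (metis add_diff_cancel_right')
    have "(\<Sum>a\<in>T. U T a * s ^ idx a) = (\<Sum>a\<in>T. U T a * (\<beta> - w \<bullet> a))"
      using wb by simp
    also have "\<dots> = (\<Sum>a\<in>T. U T a) * \<beta> - w \<bullet> (\<Sum>a\<in>T. U T a *\<^sub>R a)"
      by (simp add: algebra_simps sum_subtractf sum_distrib_right sum_distrib_left inner_sum_right)
    also have "\<dots> = 0" using U[OF TT] by simp
    finally have "s \<in> R" unfolding R_def using poly[OF TT, of s] TT by auto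
    then show False using s by simp
  qed
qed

lemma reg_cellE:
  assumes "reg_cell A h C"
  obtains w \<beta> where "\<forall>a\<in>A. \<beta> \<le> h a + w \<bullet> a" "{a\<in>A. h a + w \<bullet> a = \<beta>} \<noteq> {}"
    "C = convex hull {a\<in>A. h a + w \<bullet> a = \<beta>}"
  using assms unfolding reg_cell_def by blast

lemma refinement_props:
  fixes A :: "'a::euclidean_space set"
  assumes "finite A" "D \<in> refinement_cells A"
  obtains G where "\<And>h. reg_cell A h (G h)" "D = \<Inter>(range G)" "D \<noteq> {}" "finite (range G)"
    "\<And>h. convex (G h)" "\<And>h. polyhedron (G h)" "\<And>h. G h \<subseteq> convex hull A"
    "convex D" "polyhedron D" "compact D"
proof -
  obtain G where G: "\<And>h. reg_cell A h (G h)" "D = \<Inter>(range G)" "D \<noteq> {}"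
    using assms(2) unfolding refinement_cells_def by blast
  have sub: "\<exists>T. T \<subseteq> A \<and> G h = convex hull T" for h
  proof -
    obtain w \<beta> where "G h = convex hull {a\<in>A. h a + w \<bullet> a = \<beta>}"
      using G(1)[of h] by (rule reg_cellE)
    then show ?thesis by (intro exI[of _ "{a\<in>A. h a + w \<bullet> a = \<beta>}"]) simp
  qed
  have "range G \<subseteq> (\<lambda>T. convex hull T) ` Pow A" using sub by blast
  moreover have "finite ((\<lambda>T. convex hull T) ` Pow A)" using assms(1) by simp
  ultimately have fin: "finite (range G)" by (rule finite_subset)
  have cv: "convex (G h)" for h using sub[of h] by (auto simp: convex_convex_hull)
  have ph: "polyhedron (G h)" for h
  proof -
    obtain T where "T \<subseteq> A" "G h = convex hull T" using sub[of h] by blast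
    moreover have "finite T" using \<open>T \<subseteq> A\<close> assms(1) finite_subset by blast
    ultimately show ?thesis using polyhedron_convex_hull by simp
  qed
  have sA: "G h \<subseteq> convex hull A" for h
  proof -
    obtain T where "T \<subseteq> A" "G h = convex hull T" using sub[of h] by blast
    then show ?thesis by (simp add: hull_mono)
  qed
  have pD: "polyhedron D" unfolding G(2) using fin ph by (intro polyhedron_Inter) auto
  have bD: "bounded D"
  proof -
    have "D \<subseteq> G undefined" using G(2) by blast
    also have "\<dots> \<subseteq> convex hull A" by (rule sA)
    finally show ?thesis using assms(1) bounded_subset finite_imp_bounded_convex_hull by blast
  qed
  have cD: "convex D" unfolding G(2) using cv by (simp add: convex_INT)
  have kD: "compact D" using pD bD by (simp add: compact_eq_bounded_closed polyhedron_imp_closed)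
  show ?thesis by (rule that[OF G(1,2,3) fin cv ph sA cD pD kD])
qed

lemma dir2:
  fixes Ap Am D :: "'a::euclidean_space set"
  assumes fin: "finite Ap" and Dc: "D \<in> refinement_cells Ap" and dD: "aff_dim D = d"
    and AmD: "Am \<subseteq> D" and DL: "\<Delta> \<in> Lambda Ap D d" and fc: "\<Gamma> facet_of \<Delta>" and AmG: "Am \<subseteq> \<Gamma>"
  shows "\<exists>\<Gamma>'. \<Gamma>' facet_of D \<and> Am \<subseteq> \<Gamma>'"
proof -
  obtain G where G: "D \<noteq> {}" "convex D" "polyhedron D" "compact D"
    using refinement_props[OF fin Dc] by metis
  obtain C where C: "C \<subseteq> Ap" "\<not> affine_dependent C" "int (card C) = d + 1" "\<Delta> = convex hull C"
    and ri: "rel_interior D \<subseteq> rel_interior \<Delta>"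
    using DL unfolding Lambda_def by blast
  have finC: "finite C" using C fin finite_subset by blast
  have phD: "polyhedron \<Delta>" using C finC polyhedron_convex_hull by blast
  have adD: "aff_dim \<Delta> = d" using C aff_dim_affine_independent[OF C(2)] by (simp add: aff_dim_convex_hull)
  obtain u c where uc: "u \<noteq> 0" "\<Delta> \<subseteq> {x. u \<bullet> x \<le> c}" "\<Gamma> = \<Delta> \<inter> {x. u \<bullet> x = c}"
    using facet_of_polyhedron[OF phD fc] by blast
  have cD: "compact \<Delta>" using C finC by (simp add: compact_convex_hull finite_imp_compact)
  have "D \<subseteq> \<Delta>"
  proof -
    have "D \<subseteq> closure (rel_interior D)" using G by (simp add: convex_closure_rel_interior closure_subset)
    also have "\<dots> \<subseteq> closure \<Delta>" using ri rel_interior_subset by (meson closure_mono subset_trans)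
    also have "\<dots> = \<Delta>" using cD by (simp add: compact_imp_closed)
    finally show ?thesis .
  qed
  define T where "T = D \<inter> {x. u \<bullet> x = c}"
  have Tf: "T face_of D" unfolding T_def
    using face_of_Int_supporting_hyperplane_le[OF G(2)] \<open>D \<subseteq> \<Delta>\<close> uc(2) by blast
  have AmT: "Am \<subseteq> T" unfolding T_def using AmD AmG uc(3) by blast
  have "T \<noteq> D"
  proof
    assume "T = D"
    obtain z where z: "z \<in> rel_interior D" using G(1,2) rel_interior_eq_empty[of D] by blast
    have "z \<in> \<Gamma>" using z \<open>T = D\<close> unfolding T_def uc(3) using \<open>D \<subseteq> \<Delta>\<close> rel_interior_subset by blast
    moreover have "\<Gamma> \<inter> rel_interior \<Delta> = {}"
      using fc face_of_disjoint_rel_interior[of \<Gamma> \<Delta>] facet_of_irrefl[of \<Delta>] unfolding facet_of_def by blast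
    ultimately show False using z ri by blast
  qed
  show ?thesis
  proof (cases "T = {}")
    case False
    then obtain F where "F facet_of D" "T \<subseteq> F"
      using face_of_polyhedron_subset_facet[OF G(3) Tf False \<open>T \<noteq> D\<close>] by blast
    then show ?thesis using AmT by blast
  next
    case True
    then have Am0: "Am = {}" using AmT by blast
    have "\<not> affine D"
    proof
      assume "affine D"
      then obtain a where "D = {a}" using G(1,4) affine_bounded_eq_trivial[of D] compact_imp_bounded[of D] by blast
      then have "d = 0" using dD by simp
      then have "aff_dim \<Gamma> = -1" using fc adD unfolding facet_of_def by simp
      then show False using fc unfolding facet_of_def by (simp add: aff_dim_empty)
    qed
    then have "rel_frontier D \<noteq> {}" by (simp add: rel_frontier_eq_empty)
    then obtain F where "F facet_of D" using rel_frontier_of_polyhedron[OF G(3)] by auto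
    then show ?thesis using Am0 by blast
  qed
qed

lemma dir1:
  fixes Ap Am D \<Gamma> :: "'a::euclidean_space set"
  assumes fin: "finite Ap" and Dc: "D \<in> refinement_cells Ap" and dD: "aff_dim D = d"
    and dA: "aff_dim (convex hull Ap) \<le> d" and fc: "\<Gamma> facet_of D" and AmG: "Am \<subseteq> \<Gamma>"
  shows "\<exists>\<Delta>\<in>Lambda Ap D d. \<exists>\<Gamma>'. \<Gamma>' facet_of \<Delta> \<and> Am \<subseteq> \<Gamma>'"
proof -
  obtain G where G: "\<And>h. reg_cell Ap h (G h)" "D = \<Inter>(range G)" "D \<noteq> {}" "finite (range G)"
    "\<And>h. convex (G h)" "\<And>h. polyhedron (G h)" "\<And>h. G h \<subseteq> convex hull Ap"
    "convex D" "polyhedron D" "compact D"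
    by (rule refinement_props[OF fin Dc]) blast
  have DG: "D \<subseteq> G h" for h using G(2) by blast
  have adGh: "aff_dim (G h) = d" for h
  proof -
    have "aff_dim D \<le> aff_dim (G h)" using DG by (rule aff_dim_subset)
    moreover have "aff_dim (G h) \<le> aff_dim (convex hull Ap)" using G(7) by (rule aff_dim_subset)
    ultimately show ?thesis using dD dA by simp
  qed
  have Gf: "\<Gamma> face_of D" "\<Gamma> \<noteq> {}" "aff_dim \<Gamma> = d - 1" using fc dD unfolding facet_of_def by auto
  have cvG: "convex \<Gamma>" using face_of_imp_convex Gf(1) by blast
  obtain x where x: "x \<in> rel_interior \<Gamma>" using Gf(2) cvG rel_interior_eq_empty by blast
  have xG: "x \<in> \<Gamma>" using x rel_interior_subset by blast
  have GsD: "\<Gamma> \<subseteq> D" using Gf(1) face_of_imp_subset by blast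
  have "\<Gamma> \<noteq> D" using Gf(3) dD by auto
  then have xnD: "x \<notin> rel_interior D" using face_of_disjoint_rel_interior[OF Gf(1)] xG by blast
  obtain h0 where h0: "x \<notin> rel_interior (G h0)"
  proof -
    { assume allx: "\<forall>h. x \<in> rel_interior (G h)"
      then have xin: "x \<in> \<Inter>(rel_interior ` range G)" by auto
      have "rel_interior (\<Inter>(range G)) = \<Inter>(rel_interior ` range G)"
        using G(4,5) xin by (intro convex_rel_interior_finite_Inter) auto
      then have "x \<in> rel_interior D" using xin G(2) by simp
      with xnD have False by simp }
    then show ?thesis using that by blast
  qed
  have xF: "x \<in> rel_frontier (G h0)"
    using h0 xG GsD DG[of h0] closure_subset unfolding rel_frontier_def by blast
  obtain F where F: "F facet_of G h0" "x \<in> F" using rel_frontier_of_polyhedron[OF G(6)] xF by auto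
  obtain u c where uc: "u \<noteq> 0" "G h0 \<subseteq> {y. u \<bullet> y \<le> c}" "F = G h0 \<inter> {y. u \<bullet> y = c}"
    using facet_of_polyhedron[OF G(6) F(1)] by blast
  have GH: "\<Gamma> \<subseteq> {y. u \<bullet> y = c}"
  proof -
    have "(D \<inter> {y. u \<bullet> y = c}) face_of D"
      using face_of_Int_supporting_hyperplane_le[OF G(8)] DG[of h0] uc(2) by blast
    moreover have "(D \<inter> {y. u \<bullet> y = c}) \<inter> rel_interior \<Gamma> \<noteq> {}"
      using x xG GsD F(2) uc(3) by blast
    ultimately have "\<Gamma> \<subseteq> D \<inter> {y. u \<bullet> y = c}" using subset_of_face_of GsD by blast
    then show ?thesis by blast
  qed
  have adF: "aff_dim F = d - 1" using F(1) adGh[of h0] unfolding facet_of_def by simp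
  obtain w0 \<beta>0 where r0: "\<forall>a\<in>Ap. \<beta>0 \<le> h0 a + w0 \<bullet> a" "{a\<in>Ap. h0 a + w0 \<bullet> a = \<beta>0} \<noteq> {}"
    "G h0 = convex hull {a\<in>Ap. h0 a + w0 \<bullet> a = \<beta>0}"
    using G(1)[of h0] by (rule reg_cellE)
  define S0 where "S0 = {a\<in>Ap. h0 a + w0 \<bullet> a = \<beta>0}"
  define \<phi>0 where "\<phi>0 a = h0 a + w0 \<bullet> a - \<beta>0" for a
  have finS0: "finite S0" using fin unfolding S0_def by simp
  have S0Ap: "S0 \<subseteq> Ap" unfolding S0_def by blast
  obtain z where z: "z \<in> rel_interior D" using G(3,8) rel_interior_eq_empty by blast
  have zD: "z \<in> D" using z rel_interior_subset by blast
  have "z \<in> convex hull S0" using zD DG[of h0] r0(3) unfolding S0_def by blast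
  then obtain lam where lam: "\<forall>a\<in>S0. 0 \<le> lam a" "sum lam S0 = 1" "(\<Sum>a\<in>S0. lam a *\<^sub>R a) = z"
    using convex_hull_finite[OF finS0] by blast
  obtain g where g: "\<forall>T\<subseteq>Ap. affine_dependent T \<longrightarrow> \<not>(\<exists>w \<beta>. \<forall>a\<in>T. g a + w \<bullet> a = \<beta>)"
    using generic_height[OF fin] by blast
  define B where "B = (\<Sum>a\<in>Ap. \<bar>g a\<bar>)"
  have gB: "\<bar>g a\<bar> \<le> B" if "a \<in> Ap" for a
    unfolding B_def using fin that by (intro member_le_sum) auto
  have B0: "0 \<le> B" unfolding B_def by (simp add: sum_nonneg)
  have phi0_nn: "0 \<le> \<phi>0 a" if "a \<in> Ap" for a using r0(1) that unfolding \<phi>0_def by force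
  define m where "m = Min (insert 1 (\<phi>0 ` (Ap - S0)))"
  have m_pos: "m > 0"
  proof -
    have "\<forall>y\<in>insert 1 (\<phi>0 ` (Ap - S0)). y > 0"
    proof
      fix y assume "y \<in> insert 1 (\<phi>0 ` (Ap - S0))"
      then consider "y = 1" | a where "a \<in> Ap" "a \<notin> S0" "y = \<phi>0 a" by blast
      then show "y > 0"
      proof cases
        case 2
        then have "\<phi>0 a \<noteq> 0" unfolding \<phi>0_def S0_def by simp
        with phi0_nn[OF 2(1)] 2(3) show ?thesis by simp
      qed simp
    qed
    then show ?thesis unfolding m_def using fin by (subst Min_gr_iff) auto
  qed
  have m_le: "m \<le> \<phi>0 a" if "a \<in> Ap" "a \<notin> S0" for a
    unfolding m_def using fin that by (intro Min_le) auto
  define \<T> where "\<T> = {T. T \<subseteq> Ap \<and> z \<in> rel_interior (convex hull T)}"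
  define \<mu> where "\<mu> T = (SOME u. (\<forall>b\<in>T. 0 < u b) \<and> sum u T = 1 \<and> (\<Sum>b\<in>T. u b *\<^sub>R b) = z)" for T
  have \<mu>: "(\<forall>b\<in>T. 0 < \<mu> T b) \<and> sum (\<mu> T) T = 1 \<and> (\<Sum>b\<in>T. \<mu> T b *\<^sub>R b) = z" if "T \<in> \<T>" for T
  proof -
    have "finite T" using that fin unfolding \<T>_def by (auto intro: finite_subset)
    then have "\<exists>u. (\<forall>b\<in>T. 0 < u b) \<and> sum u T = 1 \<and> (\<Sum>b\<in>T. u b *\<^sub>R b) = z"
      using that unfolding \<T>_def by (intro relint_hull_pos) auto
    then show ?thesis unfolding \<mu>_def by (rule someI_ex)
  qed
  define V where "V = {\<mu> T b | T b. T \<in> \<T> \<and> b \<in> T}"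
  have finV: "finite V"
  proof -
    have "V \<subseteq> (\<lambda>(T, b). \<mu> T b) ` (Pow Ap \<times> Ap)" unfolding V_def \<T>_def by force
    moreover have "finite ((\<lambda>(T, b). \<mu> T b) ` (Pow Ap \<times> Ap))" using fin by simp
    ultimately show ?thesis by (rule finite_subset)
  qed
  define \<delta> where "\<delta> = Min (insert 1 V)"
  have \<delta>_pos: "\<delta> > 0"
  proof -
    have "\<forall>y\<in>insert 1 V. y > 0" unfolding V_def using \<mu> by auto
    then show ?thesis unfolding \<delta>_def using finV by (subst Min_gr_iff) auto
  qed
  have \<delta>_le: "\<delta> \<le> \<mu> T b" if "T \<in> \<T>" "b \<in> T" for T b
    unfolding \<delta>_def using finV that by (intro Min_le) (auto simp: V_def)
  define \<epsilon> where "\<epsilon> = \<delta> * m / (2 * B + 1)"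
  have \<epsilon>_pos: "\<epsilon> > 0" unfolding \<epsilon>_def using \<delta>_pos m_pos B0 by simp
  have key: "2 * \<epsilon> * B < \<delta> * m"
  proof -
    have "\<epsilon> * (2 * B + 1) = \<delta> * m" unfolding \<epsilon>_def using B0 by simp
    then show ?thesis using \<epsilon>_pos by (simp add: algebra_simps)
  qed
  define h where "h a = h0 a + \<epsilon> * g a" for a
  obtain w \<beta> where r: "\<forall>a\<in>Ap. \<beta> \<le> h a + w \<bullet> a" "{a\<in>Ap. h a + w \<bullet> a = \<beta>} \<noteq> {}"
    "G h = convex hull {a\<in>Ap. h a + w \<bullet> a = \<beta>}"
    using G(1)[of h] by (rule reg_cellE)
  define S where "S = {a\<in>Ap. h a + w \<bullet> a = \<beta>}"
  have SAp: "S \<subseteq> Ap" unfolding S_def by blast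
  have finS: "finite S" using fin unfolding S_def by simp
  have GhS: "G h = convex hull S" using r(3) unfolding S_def .
  have riD: "rel_interior D \<subseteq> rel_interior (convex hull S)"
    using relint_mono_dim[OF DG[of h]] adGh[of h] dD GhS by simp
  have ST: "S \<in> \<T>" unfolding \<T>_def using SAp riD z by blast
  define \<mu>S where "\<mu>S = \<mu> S"
  have \<mu>S: "\<forall>b\<in>S. 0 < \<mu>S b" "sum \<mu>S S = 1" "(\<Sum>b\<in>S. \<mu>S b *\<^sub>R b) = z"
    using \<mu>[OF ST] unfolding \<mu>S_def by auto
  have ineq1: "(\<Sum>b\<in>S. \<mu>S b * h b) \<le> (\<Sum>a\<in>S0. lam a * h a)"
  proof -
    have "0 \<le> (\<Sum>a\<in>S0. lam a * (h a + w \<bullet> a - \<beta>))"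
      using lam(1) r(1) S0Ap by (intro sum_nonneg) (auto intro!: mult_nonneg_nonneg)
    also have "\<dots> = (\<Sum>a\<in>S0. lam a * h a) + w \<bullet> z - \<beta>"
      using sum_affine_eval[OF lam(2)] lam(3) by simp
    finally have 1: "0 \<le> (\<Sum>a\<in>S0. lam a * h a) + w \<bullet> z - \<beta>" .
    have "0 = (\<Sum>b\<in>S. \<mu>S b * (h b + w \<bullet> b - \<beta>))"
      unfolding S_def by simp
    also have "\<dots> = (\<Sum>b\<in>S. \<mu>S b * h b) + w \<bullet> z - \<beta>"
      using sum_affine_eval[OF \<mu>S(2)] \<mu>S(3) by simp
    finally show ?thesis using 1 by simp
  qed
  have eq2: "(\<Sum>b\<in>S. \<mu>S b * \<phi>0 b) = (\<Sum>b\<in>S. \<mu>S b * h0 b) - (\<Sum>a\<in>S0. lam a * h0 a)"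
  proof -
    have "0 = (\<Sum>a\<in>S0. lam a * (h0 a + w0 \<bullet> a - \<beta>0))"
      unfolding S0_def by simp
    also have "\<dots> = (\<Sum>a\<in>S0. lam a * h0 a) + w0 \<bullet> z - \<beta>0"
      using sum_affine_eval[OF lam(2)] lam(3) by simp
    finally have 1: "0 = (\<Sum>a\<in>S0. lam a * h0 a) + w0 \<bullet> z - \<beta>0" .
    have "(\<Sum>b\<in>S. \<mu>S b * \<phi>0 b) = (\<Sum>b\<in>S. \<mu>S b * h0 b) + w0 \<bullet> z - \<beta>0"
      unfolding \<phi>0_def using sum_affine_eval[OF \<mu>S(2)] \<mu>S(3) by simp
    then show ?thesis using 1 by simp
  qed
  have bnd1: "\<bar>\<Sum>a\<in>S0. lam a * g a\<bar> \<le> B"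
  proof -
    have "\<bar>\<Sum>a\<in>S0. lam a * g a\<bar> \<le> (\<Sum>a\<in>S0. \<bar>lam a * g a\<bar>)" by (rule sum_abs)
    also have "\<dots> \<le> (\<Sum>a\<in>S0. lam a * B)"
      using lam(1) gB S0Ap by (intro sum_mono) (auto simp: abs_mult intro: mult_left_mono)
    also have "\<dots> = B" using lam(2) by (simp add: sum_distrib_right[symmetric])
    finally show ?thesis .
  qed
  have bnd2: "\<bar>\<Sum>b\<in>S. \<mu>S b * g b\<bar> \<le> B"
  proof -
    have "\<bar>\<Sum>b\<in>S. \<mu>S b * g b\<bar> \<le> (\<Sum>b\<in>S. \<bar>\<mu>S b * g b\<bar>)" by (rule sum_abs)
    also have "\<dots> \<le> (\<Sum>b\<in>S. \<mu>S b * B)"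
      proof (intro sum_mono)
      fix b assume "b \<in> S"
      then have "0 < \<mu>S b" "\<bar>g b\<bar> \<le> B" using \<mu>S(1) gB SAp by auto
      then show "\<bar>\<mu>S b * g b\<bar> \<le> \<mu>S b * B" by (simp add: abs_mult mult_left_mono)
    qed
    also have "\<dots> = B" using \<mu>S(2) by (simp add: sum_distrib_right[symmetric])
    finally show ?thesis .
  qed
  have hsum: "(\<Sum>a\<in>T. u a * h a) = (\<Sum>a\<in>T. u a * h0 a) + \<epsilon> * (\<Sum>a\<in>T. u a * g a)" for T u
    unfolding h_def by (simp add: algebra_simps sum.distrib sum_distrib_left)
  have sumphi: "(\<Sum>b\<in>S. \<mu>S b * \<phi>0 b) \<le> 2 * \<epsilon> * B"
  proof -
    have "(\<Sum>b\<in>S. \<mu>S b * \<phi>0 b) \<le> \<epsilon> * ((\<Sum>a\<in>S0. lam a * g a) - (\<Sum>b\<in>S. \<mu>S b * g b))"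
      using eq2 ineq1 hsum[of \<mu>S S] hsum[of lam S0] by (simp add: algebra_simps)
    also have "\<dots> \<le> \<epsilon> * (2 * B)"
      using bnd1 bnd2 \<epsilon>_pos by (intro mult_left_mono) auto
    finally show ?thesis by simp
  qed
  have SS0: "S \<subseteq> S0"
  proof
    fix b assume bS: "b \<in> S"
    show "b \<in> S0"
    proof (rule ccontr)
      assume nb: "b \<notin> S0"
      have bAp: "b \<in> Ap" using bS SAp by blast
      have "\<delta> * m \<le> \<mu>S b * \<phi>0 b"
        using \<delta>_le[OF ST bS] m_le[OF bAp nb] \<delta>_pos m_pos unfolding \<mu>S_def
        by (intro mult_mono) auto
      also have "\<dots> \<le> (\<Sum>b\<in>S. \<mu>S b * \<phi>0 b)"
        using finS bS \<mu>S(1) phi0_nn SAp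
      proof (intro member_le_sum)
        fix x assume "x \<in> S - {b}"
        then have "0 < \<mu>S x" "0 \<le> \<phi>0 x" using \<mu>S(1) phi0_nn SAp by auto
        then show "0 \<le> \<mu>S x * \<phi>0 x" by simp
      qed
      finally show False using sumphi key by simp
    qed
  qed
  have indep: "\<not> affine_dependent S"
  proof
    assume dep: "affine_dependent S"
    have "\<exists>w' \<beta>'. \<forall>a\<in>S. g a + w' \<bullet> a = \<beta>'"
    proof (intro exI ballI)
      fix a assume aS: "a \<in> S"
      then have e1: "h0 a + \<epsilon> * g a + w \<bullet> a = \<beta>" unfolding S_def h_def by simp
      have e2: "h0 a + w0 \<bullet> a = \<beta>0" using aS SS0 unfolding S0_def by blast
      have "\<epsilon> * g a + (w - w0) \<bullet> a = \<beta> - \<beta>0" using e1 e2 by (simp add: inner_diff_left algebra_simps)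
      moreover have "((1 / \<epsilon>) *\<^sub>R (w - w0)) \<bullet> a = ((w - w0) \<bullet> a) / \<epsilon>" by simp
      ultimately show "g a + ((1 / \<epsilon>) *\<^sub>R (w - w0)) \<bullet> a = (\<beta> - \<beta>0) / \<epsilon>"
        using \<epsilon>_pos by (simp add: field_simps del: inner_scaleR_left)
    qed
    then show False using g SAp dep by blast
  qed
  define \<Delta> where "\<Delta> = convex hull S"
  have adS: "aff_dim S = d" using adGh[of h] GhS by (simp add: aff_dim_convex_hull)
  have cardS: "int (card S) = d + 1" using aff_dim_affine_independent[OF indep] adS by simp
  have DL: "\<Delta> \<in> Lambda Ap D d"
    unfolding Lambda_def \<Delta>_def using SAp indep cardS riD by blast
  have DGh0: "\<Delta> \<subseteq> G h0" unfolding \<Delta>_def using SS0 r0(3) unfolding S0_def by (simp add: hull_mono)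
  define \<Gamma>' where "\<Gamma>' = \<Delta> \<inter> {y. u \<bullet> y = c}"
  have cvD: "convex \<Delta>" unfolding \<Delta>_def by (rule convex_convex_hull)
  have Gf': "\<Gamma>' face_of \<Delta>" unfolding \<Gamma>'_def
    using face_of_Int_supporting_hyperplane_le[OF cvD] DGh0 uc(2) by blast
  have DsD: "D \<subseteq> \<Delta>" using DG[of h] GhS unfolding \<Delta>_def by simp
  have AmG': "Am \<subseteq> \<Gamma>'" unfolding \<Gamma>'_def using AmG GH GsD DsD by blast
  have GsG': "\<Gamma> \<subseteq> \<Gamma>'" unfolding \<Gamma>'_def using GH GsD DsD by blast
  have "\<Gamma>' \<noteq> \<Delta>"
  proof
    assume "\<Gamma>' = \<Delta>"
    then have "D \<subseteq> F" using DsD DG[of h0] uc(3) unfolding \<Gamma>'_def by blast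
    then have "aff_dim D \<le> aff_dim F" by (rule aff_dim_subset)
    then show False using adF dD by simp
  qed
  then have "aff_dim \<Gamma>' < aff_dim \<Delta>" using face_of_aff_dim_lt[OF cvD Gf'] by simp
  moreover have "aff_dim \<Gamma> \<le> aff_dim \<Gamma>'" using GsG' by (rule aff_dim_subset)
  moreover have "aff_dim \<Delta> = d" unfolding \<Delta>_def using adS by (simp add: aff_dim_convex_hull)
  ultimately have "aff_dim \<Gamma>' = aff_dim \<Delta> - 1" using Gf(3) by simp
  moreover have "\<Gamma>' \<noteq> {}" using GsG' Gf(2) by blast
  ultimately have "\<Gamma>' facet_of \<Delta>" using Gf' unfolding facet_of_def by blast
  then show ?thesis using DL AmG' by blast
qed

theorem lemma3p2:
  fixes Ap Am D :: "'a::euclidean_space set"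
  assumes "finite Ap" and "finite Am" and "Ap \<inter> Am = {}"
    and "nonseparable Ap Am"
    and "D \<in> Fd Ap (pair_dim Ap Am)" and "Am \<subseteq> D"
  shows "(\<exists>\<Gamma>. \<Gamma> facet_of D \<and> Am \<subseteq> \<Gamma>) \<longleftrightarrow>
         (\<exists>\<Delta> \<in> Lambda Ap D (pair_dim Ap Am). \<exists>\<Gamma>. \<Gamma> facet_of \<Delta> \<and> Am \<subseteq> \<Gamma>)"
proof -
  have Dc: "D \<in> refinement_cells Ap" and dD: "aff_dim D = pair_dim Ap Am"
    using assms(5) unfolding Fd_def by auto
  have dA: "aff_dim (convex hull Ap) \<le> pair_dim Ap Am"
    unfolding pair_dim_def by (intro aff_dim_subset hull_mono) blast
  show ?thesis
  proof
    assume "\<exists>\<Gamma>. \<Gamma> facet_of D \<and> Am \<subseteq> \<Gamma>"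
    then obtain \<Gamma> where "\<Gamma> facet_of D" "Am \<subseteq> \<Gamma>" by blast
    then show "\<exists>\<Delta> \<in> Lambda Ap D (pair_dim Ap Am). \<exists>\<Gamma>. \<Gamma> facet_of \<Delta> \<and> Am \<subseteq> \<Gamma>"
      using dir1[OF assms(1) Dc dD dA] by blast
  next
    assume "\<exists>\<Delta> \<in> Lambda Ap D (pair_dim Ap Am). \<exists>\<Gamma>. \<Gamma> facet_of \<Delta> \<and> Am \<subseteq> \<Gamma>"
    then obtain \<Delta> \<Gamma> where "\<Delta> \<in> Lambda Ap D (pair_dim Ap Am)" "\<Gamma> facet_of \<Delta>" "Am \<subseteq> \<Gamma>" by blast
    then show "\<exists>\<Gamma>. \<Gamma> facet_of D \<and> Am \<subseteq> \<Gamma>"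
      using dir2[OF assms(1) Dc dD assms(6)] by blast
  qed
qed

end
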